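(* Let $X_1,X_2,\dots$ be i.i.d. $\mathbb{Z}$-valued random variables and $S_n=\sum_{j=1}^nX_j$. For every $N\in\mathbb{N}\setminus\{1\}$, $$\frac{1}{1+\sum_{i=1}^{N-1}P\{S_i\in[i]_N\}}\le\mathbb{P}^{(N)}_{\mathcal{R}}\Big(\bigcup_{n=1}^N\{\mathcal{R}^{(N)}_n=(n\bmod N)\}\Big)\le\frac{2}{1+\sum_{i=1}^{N-1}P\{S_i\in[i]_N\}}.$$
   Context: $X_j$ live on $(\Omega,\mathcal{F},P)$. $[y]_N=\{y+kN:k\in\mathbb{Z}\}$. For $N\in\mathbb{N}$, $X^{(N)}_0$ is uniform on $\{0,\dots,N-1\}$ under $(\Omega_N,\mathcal{F}_N,\mu_N)$; $(b\bmod N)$ is the remainder of $b\in\mathbb{Z}$ divided by $N$; $\mathcal{R}^{(N)}_n=(X^{(N)}_0+S_n\bmod N)$; $\mathbb{P}^{(N)}_{\mathcal{R}}=\mu_N\times P$. *)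

theory Defs
  imports "HOL-Probability.Probability"
begin

definition partial_sum :: "(nat \<Rightarrow> 'a \<Rightarrow> int) \<Rightarrow> nat \<Rightarrow> 'a \<Rightarrow> int" where
  "partial_sum X n \<omega> = (\<Sum>j\<in>{1..n}. X j \<omega>)"

text \<open>The product space mu_N x P, with X_0^(N) uniform on {0,...,N-1}.\<close>
definition R_space :: "nat \<Rightarrow> 'a measure \<Rightarrow> (nat \<times> 'a) measure" where
  "R_space N M = measure_pmf (pmf_of_set {0..<N}) \<Otimes>\<^sub>M M"

definition R_proc :: "nat \<Rightarrow> (nat \<Rightarrow> 'a \<Rightarrow> int) \<Rightarrow> nat \<Rightarrow> nat \<times> 'a \<Rightarrow> int" where
  "R_proc N X n z = (int (fst z) + partial_sum X n (snd z)) mod int N"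

end

theory Submission imports Defs begin


definition newv :: "(nat \<Rightarrow> 'b) \<Rightarrow> nat \<Rightarrow> bool" where
  "newv V t = (\<forall>s\<in>{1..<t}. V s \<noteq> V t)"

lemma card_image_newv: "card (V ` {1..N}) = card {t\<in>{1..N}. newv V t}"
proof (induction N)
  case 0 then show ?case by simp
next
  case (Suc N)
  have e1: "{1..Suc N} = insert (Suc N) {1..N}" by auto
  have e2: "{t\<in>{1..Suc N}. newv V t} = (if newv V (Suc N) then insert (Suc N) {t\<in>{1..N}. newv V t} else {t\<in>{1..N}. newv V t})"
    unfolding e1 by auto
  have nv: "newv V (Suc N) \<longleftrightarrow> V (Suc N) \<notin> V ` {1..N}"
  proof -
    have "newv V (Suc N) \<longleftrightarrow> (\<forall>s\<in>{1..N}. V s \<noteq> V (Suc N))"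
      unfolding newv_def by (simp add: atLeastLessThanSuc_atLeastAtMost)
    then show ?thesis by (auto simp: image_iff)
  qed
  have im: "V ` {1..Suc N} = insert (V (Suc N)) (V ` {1..N})" unfolding e1 by simp
  show ?case
  proof (cases "newv V (Suc N)")
    case True
    then have "{t\<in>{1..Suc N}. newv V t} = insert (Suc N) {t\<in>{1..N}. newv V t}" using e2 by simp
    moreover have "Suc N \<notin> {t\<in>{1..N}. newv V t}" by simp
    ultimately show ?thesis using True nv Suc.IH im by simp
  next
    case False
    then have "{t\<in>{1..Suc N}. newv V t} = {t\<in>{1..N}. newv V t}" using e2 by simp
    then show ?thesis using False nv Suc.IH im by (simp add: insert_absorb)
  qed
qed

lemma count_le:
  assumes "N \<le> T"
  shows "(\<Sum>t\<in>{t\<in>{1..N}. newv V t}. card {n\<in>{t..T}. V n = V t}) \<le> T"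
proof -
  let ?F = "\<lambda>t. {n\<in>{t..T}. V n = V t}"
  let ?I = "{t\<in>{1..N}. newv V t}"
  have "(\<Sum>t\<in>?I. card (?F t)) = card (\<Union>t\<in>?I. ?F t)"
  proof (rule card_UN_disjoint[symmetric])
    show "finite ?I" by simp
    show "\<forall>i\<in>?I. finite (?F i)" by simp
    show "\<forall>i\<in>?I. \<forall>j\<in>?I. i \<noteq> j \<longrightarrow> ?F i \<inter> ?F j = {}"
    proof (intro ballI impI)
      fix i j assume i: "i \<in> ?I" and j: "j \<in> ?I" and ij: "i \<noteq> j"
      show "?F i \<inter> ?F j = {}"
      proof (rule ccontr)
        assume "?F i \<inter> ?F j \<noteq> {}"
        then obtain n where "V n = V i" "V n = V j" by auto
        then have "V i = V j" by simp
        show False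
        proof (cases "i < j")
          case True then show ?thesis using j i \<open>V i = V j\<close> unfolding newv_def by auto
        next
          case False then have "j < i" using ij by simp
          then show ?thesis using j i \<open>V i = V j\<close> unfolding newv_def by auto
        qed
      qed
    qed
  qed
  also have "\<dots> \<le> card {1..T}"
    by (rule card_mono) auto
  finally show ?thesis by simp
qed

lemma count_eq:
  "(\<Sum>t\<in>{t\<in>{1..N}. newv V t}. card {n\<in>{t..N}. V n = V t}) = N"
proof (rule antisym)
  show "(\<Sum>t\<in>{t\<in>{1..N}. newv V t}. card {n\<in>{t..N}. V n = V t}) \<le> N"
    by (rule count_le) simp
next
  let ?F = "\<lambda>t. {n\<in>{t..N}. V n = V t}"
  let ?I = "{t\<in>{1..N}. newv V t}"
  have "{1..N} \<subseteq> (\<Union>t\<in>?I. ?F t)"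
  proof
    fix n assume n: "n \<in> {1..N}"
    define t where "t = (LEAST s. 1 \<le> s \<and> V s = V n)"
    have P: "1 \<le> t \<and> V t = V n" unfolding t_def by (rule LeastI[of _ n]) (use n in auto)
    have tn: "t \<le> n" unfolding t_def by (rule Least_le) (use n in auto)
    have "newv V t" unfolding newv_def
    proof
      fix s assume s: "s \<in> {1..<t}"
      show "V s \<noteq> V t"
      proof
        assume "V s = V t"
        then have "1 \<le> s \<and> V s = V n" using P s by auto
        then have "t \<le> s" unfolding t_def by (rule Least_le)
        then show False using s by auto
      qed
    qed
    then show "n \<in> (\<Union>t\<in>?I. ?F t)" using P tn n by auto
  qed
  then have "N \<le> card (\<Union>t\<in>?I. ?F t)"
  proof -
    have "card {1..N} \<le> card (\<Union>t\<in>?I. ?F t)" by (rule card_mono) (simp, fact)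
    then show ?thesis by simp
  qed
  also have "\<dots> \<le> (\<Sum>t\<in>?I. card (?F t))" by (rule card_UN_le) simp
  finally show "N \<le> (\<Sum>t\<in>?I. card (?F t))" .
qed



lemma meas2:
  fixes f :: "'a \<Rightarrow> 'b::countable" and g :: "'a \<Rightarrow> 'c::countable"
  assumes "f \<in> measurable M (count_space UNIV)" "g \<in> measurable M (count_space UNIV)"
  shows "(\<lambda>x. h (f x) (g x)) \<in> measurable M (count_space UNIV)"
proof -
  have "\<And>i. (\<lambda>x. h i (g x)) \<in> measurable M (count_space UNIV)"
    using measurable_compose_countable[where f="\<lambda>j x. h i j" and g=g for i] assms(2) by simp
  then show ?thesis using measurable_compose_countable[where f="\<lambda>i x. h i (g x)" and g=f] assms(1) by simp
qed

lemma meas_sum: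
  fixes f :: "nat \<Rightarrow> 'a \<Rightarrow> int"
  assumes "\<And>j. j \<in> K \<Longrightarrow> f j \<in> measurable M (count_space UNIV)"
  shows "(\<lambda>x. \<Sum>j\<in>K. f j x) \<in> measurable M (count_space UNIV)"
proof (cases "finite K")
  case True
  then show ?thesis using assms
  proof (induction K rule: finite_induct)
    case empty then show ?case by simp
  next
    case (insert a F)
    have "(\<lambda>x. f a x + (\<Sum>j\<in>F. f j x)) \<in> measurable M (count_space UNIV)"
      using insert by (intro meas2[where h="(+)", of "f a" _ "\<lambda>x. \<Sum>j\<in>F. f j x"]) auto
    then show ?case using insert by simp
  qed
next
  case False then show ?thesis by simp
qed

locale iidZ = prob_space M for M :: "'a measure" +
  fixes X :: "nat \<Rightarrow> 'a \<Rightarrow> int"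
  assumes ind: "indep_vars (\<lambda>_. count_space UNIV) X {1..}"
    and idd: "\<And>j. j \<ge> 1 \<Longrightarrow> distr M (count_space UNIV) (X j) = distr M (count_space UNIV) (X 1)"
begin

lemma X_meas: "j \<ge> 1 \<Longrightarrow> X j \<in> measurable M (count_space UNIV)"
  using ind unfolding indep_vars_def by auto

lemma block_sum_meas: "(\<lambda>\<omega>. \<Sum>j\<in>{a..b}. X j \<omega>) \<in> measurable M (count_space UNIV)" if "a \<ge> 1"
  using that by (intro meas_sum X_meas) auto

lemma S_meas: "partial_sum X n \<in> measurable M (count_space UNIV)"
  unfolding partial_sum_def[abs_def] by (rule block_sum_meas) simp

lemma indep_block:
  fixes f :: "(nat \<Rightarrow> int) \<Rightarrow> 'b" and g :: "(nat \<Rightarrow> int) \<Rightarrow> 'b"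
  assumes "I \<subseteq> {1..}" "J \<subseteq> {1..}" "I \<inter> J = {}"
    and f: "f \<in> measurable (PiM I (\<lambda>_. count_space UNIV)) (count_space UNIV)"
    and g: "g \<in> measurable (PiM J (\<lambda>_. count_space UNIV)) (count_space UNIV)"
  shows "indep_var (count_space UNIV) (\<lambda>\<omega>. f (restrict (\<lambda>i. X i \<omega>) I))
                   (count_space UNIV) (\<lambda>\<omega>. g (restrict (\<lambda>i. X i \<omega>) J))"
  using indep_var_compose[OF indep_var_restrict[OF ind assms(3,1,2)] f g] by (simp add: comp_def)

lemma PiM_sum_meas:
  fixes K :: "nat set"
  assumes "K \<subseteq> I"
  shows "(\<lambda>x. \<Sum>j\<in>K. x j :: int) \<in> measurable (PiM I (\<lambda>_. count_space UNIV)) (count_space UNIV)"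
proof -
  have "(\<lambda>x. \<Sum>j\<in>K. x j :: int) \<in> measurable (PiM I (\<lambda>_. count_space UNIV)) (count_space UNIV)"
    by (rule meas_sum[of K "\<lambda>j x. x j"]) (use assms in \<open>auto intro: measurable_component_singleton\<close>)
  then show ?thesis by simp
qed

lemma sum_distr:
  fixes a b :: "'a \<Rightarrow> int"
  assumes "indep_var (count_space UNIV) a (count_space UNIV) b"
  shows "distr M (count_space UNIV) (\<lambda>\<omega>. a \<omega> + b \<omega>) =
    distr (distr M (count_space UNIV) a \<Otimes>\<^sub>M distr M (count_space UNIV) b) (count_space UNIV) (\<lambda>(u,v). u + v)"
proof -
  have ra: "a \<in> measurable M (count_space UNIV)" and rb: "b \<in> measurable M (count_space UNIV)"
    using indep_var_rv1[OF assms] indep_var_rv2[OF assms] by auto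
  have pm: "(\<lambda>(u::int,v::int). u + v) \<in> measurable (count_space UNIV \<Otimes>\<^sub>M count_space UNIV) (count_space UNIV)"
    using meas2[OF measurable_fst measurable_snd, where h="(+)"]
    by (simp add: case_prod_beta')
  have h1: "distr M (count_space UNIV) (\<lambda>\<omega>. a \<omega> + b \<omega>) =
      distr (distr M (count_space UNIV \<Otimes>\<^sub>M count_space UNIV) (\<lambda>\<omega>. (a \<omega>, b \<omega>))) (count_space UNIV) (\<lambda>(u,v). u + v)"
  proof -
    have pair: "(\<lambda>\<omega>. (a \<omega>, b \<omega>)) \<in> measurable M (count_space UNIV \<Otimes>\<^sub>M count_space UNIV)"
      by (rule measurable_Pair[OF ra rb])
    have "distr (distr M (count_space UNIV \<Otimes>\<^sub>M count_space UNIV) (\<lambda>\<omega>. (a \<omega>, b \<omega>))) (count_space UNIV) (\<lambda>(u,v). u + v)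
       = distr M (count_space UNIV) ((\<lambda>(u,v). u + v) \<circ> (\<lambda>\<omega>. (a \<omega>, b \<omega>)))"
      by (rule distr_distr[OF pm pair])
    then show ?thesis by (simp add: comp_def)
  qed
  have h2: "distr M (count_space UNIV \<Otimes>\<^sub>M count_space UNIV) (\<lambda>\<omega>. (a \<omega>, b \<omega>)) =
      distr M (count_space UNIV) a \<Otimes>\<^sub>M distr M (count_space UNIV) b"
  proof -
    from indep_var_distribution_eq[THEN iffD1, OF assms]
    show ?thesis by (elim conjE) (rule sym)
  qed
  show ?thesis using h1 unfolding h2 .
qed

lemma shift_distr:
  "distr M (count_space UNIV) (\<lambda>\<omega>. \<Sum>j\<in>{t+1..t+k}. X j \<omega>) =
   distr M (count_space UNIV) (\<lambda>\<omega>. \<Sum>j\<in>{1..k}. X j \<omega>)"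
proof (induction k)
  case 0 then show ?case by simp
next
  case (Suc k)
  have iv: "indep_var (count_space UNIV) (\<lambda>\<omega>. \<Sum>j\<in>{s+1..s+k}. X j \<omega>) (count_space UNIV) (X (s+k+1))" for s
  proof -
    have "indep_var (count_space UNIV) (\<lambda>\<omega>. (\<lambda>x. \<Sum>j\<in>{s+1..s+k}. x j) (restrict (\<lambda>i. X i \<omega>) {s+1..s+k}))
       (count_space UNIV) (\<lambda>\<omega>. (\<lambda>x. x (s+k+1)) (restrict (\<lambda>i. X i \<omega>) {s+k+1}))"
      by (rule indep_block) (auto intro: PiM_sum_meas measurable_component_singleton)
    moreover have "(\<lambda>\<omega>. (\<lambda>x. \<Sum>j\<in>{s+1..s+k}. x j) (restrict (\<lambda>i. X i \<omega>) {s+1..s+k})) = (\<lambda>\<omega>. \<Sum>j\<in>{s+1..s+k}. X j \<omega>)"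
      by (auto intro!: sum.cong)
    ultimately show ?thesis by simp
  qed
  have eq: "(\<lambda>\<omega>. \<Sum>j\<in>{s+1..s+Suc k}. X j \<omega>) = (\<lambda>\<omega>. (\<Sum>j\<in>{s+1..s+k}. X j \<omega>) + X (s+k+1) \<omega>)" for s
  proof -
    have "{s+1..s+Suc k} = insert (s+k+1) {s+1..s+k}" by auto
    then show ?thesis by (simp add: add.commute)
  qed
  have "distr M (count_space UNIV) (\<lambda>\<omega>. \<Sum>j\<in>{t+1..t+Suc k}. X j \<omega>) =
     distr (distr M (count_space UNIV) (\<lambda>\<omega>. \<Sum>j\<in>{t+1..t+k}. X j \<omega>) \<Otimes>\<^sub>M distr M (count_space UNIV) (X (t+k+1))) (count_space UNIV) (\<lambda>(u,v). u + v)"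
    unfolding eq by (rule sum_distr[OF iv])
  also have "\<dots> = distr (distr M (count_space UNIV) (\<lambda>\<omega>. \<Sum>j\<in>{0+1..0+k}. X j \<omega>) \<Otimes>\<^sub>M distr M (count_space UNIV) (X (0+k+1))) (count_space UNIV) (\<lambda>(u,v). u + v)"
  proof -
    have d1: "distr M (count_space UNIV) (X (t+k+1)) = distr M (count_space UNIV) (X 1)" by (rule idd) simp
    have d2: "distr M (count_space UNIV) (X (0+k+1)) = distr M (count_space UNIV) (X 1)" by (rule idd) simp
    show ?thesis unfolding Suc.IH d1 d2 by simp
  qed
  also have "\<dots> = distr M (count_space UNIV) (\<lambda>\<omega>. \<Sum>j\<in>{0+1..0+Suc k}. X j \<omega>)"
    unfolding eq by (rule sum_distr[OF iv, symmetric])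
  finally show ?case by simp
qed

end


definition Vf :: "nat \<Rightarrow> (nat \<Rightarrow> 'a \<Rightarrow> int) \<Rightarrow> nat \<Rightarrow> 'a \<Rightarrow> int" where
  "Vf N X n \<omega> = (int n - partial_sum X n \<omega>) mod int N"

lemma meas1:
  fixes f :: "'a \<Rightarrow> 'b::countable"
  assumes "f \<in> measurable M (count_space UNIV)"
  shows "(\<lambda>x. h (f x)) \<in> measurable M (count_space UNIV)"
  using meas2[OF assms assms, where h="\<lambda>a b. h a"] by simp

lemma pred_set: "P \<in> measurable M (count_space UNIV) \<Longrightarrow> {x\<in>space M. P x} \<in> sets M"
proof -
  assume "P \<in> measurable M (count_space UNIV)"
  moreover have "{x\<in>space M. P x} = P -` {True} \<inter> space M" by auto
  ultimately show ?thesis by (metis measurable_sets sets_UNIV UNIV_I)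
qed

lemma of_bool_integral:
  assumes "prob_space M" and P: "P \<in> measurable M (count_space UNIV)"
  shows "integrable M (\<lambda>\<omega>. of_bool (P \<omega>) :: real)"
    and "(\<integral>\<omega>. of_bool (P \<omega>) \<partial>M) = measure M {\<omega>\<in>space M. P \<omega>}"
proof -
  interpret prob_space M by fact
  have S: "{\<omega>\<in>space M. P \<omega>} \<in> sets M" by (rule pred_set[OF P])
  have e: "\<And>\<omega>. \<omega> \<in> space M \<Longrightarrow> (of_bool (P \<omega>) :: real) = indicator {\<omega>\<in>space M. P \<omega>} \<omega>"
    by (auto simp: indicator_def)
  have "integrable M (indicator {\<omega>\<in>space M. P \<omega>} :: 'a \<Rightarrow> real)"
    by (intro integrable_real_indicator S) (simp add: less_top[symmetric])
  then show "integrable M (\<lambda>\<omega>. of_bool (P \<omega>) :: real)"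
    by (rule Bochner_Integration.integrable_cong[THEN iffD2, rotated -1]) (auto simp: e)
  have "(\<integral>\<omega>. of_bool (P \<omega>) \<partial>M) = (\<integral>\<omega>. indicator {\<omega>\<in>space M. P \<omega>} \<omega> \<partial>M)"
    by (rule Bochner_Integration.integral_cong) (auto simp: e)
  also have "\<dots> = measure M {\<omega>\<in>space M. P \<omega>}" by (simp add: Int_absorb2)
  finally show "(\<integral>\<omega>. of_bool (P \<omega>) \<partial>M) = measure M {\<omega>\<in>space M. P \<omega>}" .
qed

context iidZ
begin

definition pk :: "nat \<Rightarrow> nat \<Rightarrow> real" where
  "pk N k = prob {\<omega>\<in>space M. partial_sum X k \<omega> mod int N = int k mod int N}"

lemma V_meas: "Vf N X n \<in> measurable M (count_space UNIV)"
  unfolding Vf_def[abs_def] by (rule meas1[OF S_meas])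

lemma new_meas: "(\<lambda>\<omega>. newv (\<lambda>n. Vf N X n \<omega>) t) \<in> measurable M (count_space UNIV)"
  unfolding newv_def
  by (rule pred_intros_finite(3)[where I="{1..<t}" and P="\<lambda>\<omega> s. Vf N X s \<omega> \<noteq> Vf N X t \<omega>"])
     (auto intro: meas2[OF V_meas V_meas, where h="(\<noteq>)"])

lemma eqV_meas: "(\<lambda>\<omega>. newv (\<lambda>n. Vf N X n \<omega>) t \<and> Vf N X n \<omega> = Vf N X t \<omega>) \<in> measurable M (count_space UNIV)"
  by (rule meas2[OF new_meas meas2[OF V_meas V_meas, where h="(=)"], where h="(\<and>)"])

lemma shift_prob:
  "prob {\<omega>\<in>space M. (\<Sum>j\<in>{t+1..t+k}. X j \<omega>) mod int N = int k mod int N} = pk N k"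
proof -
  have m1: "(\<lambda>\<omega>. \<Sum>j\<in>{t+1..t+k}. X j \<omega>) \<in> measurable M (count_space UNIV)"
    by (rule block_sum_meas) simp
  have m2: "(\<lambda>\<omega>. \<Sum>j\<in>{1..k}. X j \<omega>) \<in> measurable M (count_space UNIV)"
    by (rule block_sum_meas) simp
  let ?B = "{v. v mod int N = int k mod int N}"
  have "prob {\<omega>\<in>space M. (\<Sum>j\<in>{t+1..t+k}. X j \<omega>) mod int N = int k mod int N}
      = measure (distr M (count_space UNIV) (\<lambda>\<omega>. \<Sum>j\<in>{t+1..t+k}. X j \<omega>)) ?B"
    by (subst measure_distr[OF m1]) (auto intro!: arg_cong[where f=prob])
  also have "\<dots> = measure (distr M (count_space UNIV) (\<lambda>\<omega>. \<Sum>j\<in>{1..k}. X j \<omega>)) ?B"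
    by (simp only: shift_distr)
  also have "\<dots> = pk N k"
    unfolding pk_def partial_sum_def
    by (subst measure_distr[OF m2]) (auto intro!: arg_cong[where f=prob])
  finally show ?thesis .
qed

lemma psum_split: "partial_sum X (t+k) \<omega> = partial_sum X t \<omega> + (\<Sum>j\<in>{t+1..t+k}. X j \<omega>)"
  unfolding partial_sum_def by (rule sum.ub_add_nat) simp

lemma V_eq_iff: "Vf N X (t+k) \<omega> = Vf N X t \<omega> \<longleftrightarrow> (\<Sum>j\<in>{t+1..t+k}. X j \<omega>) mod int N = int k mod int N"
proof -
  define Z where "Z = (\<Sum>j\<in>{t+1..t+k}. X j \<omega>)"
  define St where "St = partial_sum X t \<omega>"
  have "Vf N X (t+k) \<omega> = Vf N X t \<omega> \<longleftrightarrow> (int (t+k) - (St + Z)) mod int N = (int t - St) mod int N"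
    unfolding Vf_def psum_split St_def Z_def by simp
  also have "\<dots> \<longleftrightarrow> int N dvd ((int (t+k) - (St + Z)) - (int t - St))"
    by (rule mod_eq_dvd_iff)
  also have "\<dots> \<longleftrightarrow> int N dvd (Z - int k)"
  proof -
    have "(int (t+k) - (St + Z)) - (int t - St) = - (Z - int k)" by simp
    then show ?thesis by (simp only: dvd_minus_iff)
  qed
  also have "\<dots> \<longleftrightarrow> Z mod int N = int k mod int N"
    by (rule mod_eq_dvd_iff[symmetric])
  finally show ?thesis unfolding Z_def .
qed

lemma joint:
  assumes "t \<ge> 1"
  shows "prob {\<omega>\<in>space M. newv (\<lambda>n. Vf N X n \<omega>) t \<and> Vf N X (t+k) \<omega> = Vf N X t \<omega>}
       = prob {\<omega>\<in>space M. newv (\<lambda>n. Vf N X n \<omega>) t} * pk N k"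
proof -
  define f where "f = (\<lambda>x::nat\<Rightarrow>int. newv (\<lambda>s. (int s - (\<Sum>j\<in>{1..s}. x j)) mod int N) t)"
  define g where "g = (\<lambda>x::nat\<Rightarrow>int. (\<Sum>j\<in>{t+1..t+k}. x j) mod int N = int k mod int N)"
  have fm: "f \<in> measurable (PiM {1..t} (\<lambda>_. count_space UNIV)) (count_space UNIV)"
  proof -
    have sm: "s \<le> t \<Longrightarrow> (\<lambda>x. (int s - (\<Sum>j\<in>{1..s}. x j)) mod int N) \<in> measurable (PiM {1..t} (\<lambda>_. count_space UNIV)) (count_space UNIV)" for s
      by (rule meas1[OF PiM_sum_meas]) auto
    show ?thesis unfolding f_def newv_def
      by (rule pred_intros_finite(3)[where I="{1..<t}" and P="\<lambda>x s. (int s - (\<Sum>j\<in>{1..s}. x j)) mod int N \<noteq> (int t - (\<Sum>j\<in>{1..t}. x j)) mod int N"])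
         (use meas2[OF sm sm, where h="(\<noteq>)"] in auto)
  qed
  have gm: "g \<in> measurable (PiM {t+1..t+k} (\<lambda>_. count_space UNIV)) (count_space UNIV)"
    unfolding g_def by (rule meas1[OF PiM_sum_meas]) auto
  have iv: "indep_var (count_space UNIV) (\<lambda>\<omega>. f (restrict (\<lambda>i. X i \<omega>) {1..t}))
                   (count_space UNIV) (\<lambda>\<omega>. g (restrict (\<lambda>i. X i \<omega>) {t+1..t+k}))"
    by (rule indep_block[OF _ _ _ fm gm]) auto
  have fe: "f (restrict (\<lambda>i. X i \<omega>) {1..t}) = newv (\<lambda>n. Vf N X n \<omega>) t" for \<omega>
  proof -
    have "s \<le> t \<Longrightarrow> (\<Sum>j\<in>{1..s}. restrict (\<lambda>i. X i \<omega>) {1..t} j) = partial_sum X s \<omega>" for s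
      unfolding partial_sum_def by (rule sum.cong) auto
    then show ?thesis unfolding f_def newv_def Vf_def by auto
  qed
  have ge: "g (restrict (\<lambda>i. X i \<omega>) {t+1..t+k}) = (Vf N X (t+k) \<omega> = Vf N X t \<omega>)" for \<omega>
  proof -
    have "(\<Sum>j\<in>{t+1..t+k}. restrict (\<lambda>i. X i \<omega>) {t+1..t+k} j) = (\<Sum>j\<in>{t+1..t+k}. X j \<omega>)"
      by (rule sum.cong) auto
    then show ?thesis unfolding g_def V_eq_iff by simp
  qed
  have "\<P>(\<omega> in M. f (restrict (\<lambda>i. X i \<omega>) {1..t}) \<in> {True} \<and> g (restrict (\<lambda>i. X i \<omega>) {t+1..t+k}) \<in> {True})
     = \<P>(\<omega> in M. f (restrict (\<lambda>i. X i \<omega>) {1..t}) \<in> {True}) * \<P>(\<omega> in M. g (restrict (\<lambda>i. X i \<omega>) {t+1..t+k}) \<in> {True})"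
    by (rule prob_indep_random_variable[OF iv]) auto
  then have "prob {\<omega>\<in>space M. newv (\<lambda>n. Vf N X n \<omega>) t \<and> Vf N X (t+k) \<omega> = Vf N X t \<omega>}
     = prob {\<omega>\<in>space M. newv (\<lambda>n. Vf N X n \<omega>) t} * prob {\<omega>\<in>space M. (\<Sum>j\<in>{t+1..t+k}. X j \<omega>) mod int N = int k mod int N}"
    unfolding fe ge V_eq_iff by simp
  then show ?thesis unfolding shift_prob .
qed

end


lemma card_filter_sum: "finite A \<Longrightarrow> real (card {x\<in>A. P x}) = (\<Sum>x\<in>A. of_bool (P x))"
proof -
  assume f: "finite A"
  have "real (card {x\<in>A. P x}) = (\<Sum>x\<in>{x\<in>A. P x}. 1::real)" by simp
  also have "\<dots> = (\<Sum>x\<in>A. if P x then 1 else 0)" by (rule sum.inter_filter[OF f])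
  finally show ?thesis by (simp add: of_bool_def)
qed

lemma card_run:
  fixes t T :: nat
  assumes "t \<le> T"
  shows "card {n\<in>{t..T}. V n = V t} = 1 + card {k\<in>{1..T-t}. V (t+k) = V t}"
proof -
  have "{n\<in>{t..T}. V n = V t} = insert t ((\<lambda>k. t+k) ` {k\<in>{1..T-t}. V (t+k) = V t})"
  proof (rule set_eqI, rule iffI)
    fix n assume n: "n \<in> {n\<in>{t..T}. V n = V t}"
    show "n \<in> insert t ((\<lambda>k. t+k) ` {k\<in>{1..T-t}. V (t+k) = V t})"
    proof (cases "n = t")
      case False
      then have "n - t \<in> {k\<in>{1..T-t}. V (t+k) = V t}" "n = t + (n - t)" using n by auto
      then show ?thesis by blast
    qed simp
  next
    fix n assume "n \<in> insert t ((\<lambda>k. t+k) ` {k\<in>{1..T-t}. V (t+k) = V t})"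
    then show "n \<in> {n\<in>{t..T}. V n = V t}" using assms by auto
  qed
  moreover have "t \<notin> (\<lambda>k. t+k) ` {k\<in>{1..T-t}. V (t+k) = V t}" by auto
  moreover have "card ((\<lambda>k. t+k) ` {k\<in>{1..T-t}. V (t+k) = V t}) = card {k\<in>{1..T-t}. V (t+k) = V t}"
    by (rule card_image) (simp add: inj_on_def)
  ultimately show ?thesis by simp
qed

context iidZ
begin

lemma pointwise:
  assumes "N \<le> T"
  shows "(\<Sum>t\<in>{1..N}. of_bool (newv (\<lambda>n. Vf N X n \<omega>) t) +
            (\<Sum>k\<in>{1..T-t}. of_bool (newv (\<lambda>n. Vf N X n \<omega>) t \<and> Vf N X (t+k) \<omega> = Vf N X t \<omega>)))
       = real (\<Sum>t\<in>{t\<in>{1..N}. newv (\<lambda>n. Vf N X n \<omega>) t}. card {n\<in>{t..T}. Vf N X n \<omega> = Vf N X t \<omega>})"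
proof -
  let ?V = "\<lambda>n. Vf N X n \<omega>"
  have "(\<Sum>t\<in>{1..N}. of_bool (newv ?V t) + (\<Sum>k\<in>{1..T-t}. of_bool (newv ?V t \<and> ?V (t+k) = ?V t)))
     = (\<Sum>t\<in>{1..N}. if newv ?V t then real (card {n\<in>{t..T}. ?V n = ?V t}) else 0)"
  proof (rule sum.cong[OF refl])
    fix t assume t: "t \<in> {1..N}"
    show "of_bool (newv ?V t) + (\<Sum>k\<in>{1..T-t}. of_bool (newv ?V t \<and> ?V (t+k) = ?V t))
        = (if newv ?V t then real (card {n\<in>{t..T}. ?V n = ?V t}) else 0)"
    proof (cases "newv ?V t")
      case True
      have "real (card {n\<in>{t..T}. ?V n = ?V t}) = 1 + real (card {k\<in>{1..T-t}. ?V (t+k) = ?V t})"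
        using card_run[of t T ?V] t assms by simp
      also have "real (card {k\<in>{1..T-t}. ?V (t+k) = ?V t}) = (\<Sum>k\<in>{1..T-t}. of_bool (?V (t+k) = ?V t))"
        by (rule card_filter_sum) simp
      finally show ?thesis using True by simp
    qed simp
  qed
  also have "\<dots> = (\<Sum>t\<in>{t\<in>{1..N}. newv ?V t}. real (card {n\<in>{t..T}. ?V n = ?V t}))"
    by (rule sum.inter_filter[symmetric]) simp
  also have "\<dots> = real (\<Sum>t\<in>{t\<in>{1..N}. newv ?V t}. card {n\<in>{t..T}. ?V n = ?V t})"
    by simp
  finally show ?thesis .
qed

lemma expect_count:
  assumes "N \<le> T"
  shows "(\<Sum>t\<in>{1..N}. prob {\<omega>\<in>space M. newv (\<lambda>n. Vf N X n \<omega>) t} * (1 + (\<Sum>k\<in>{1..T-t}. pk N k)))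
     = (\<integral>\<omega>. real (\<Sum>t\<in>{t\<in>{1..N}. newv (\<lambda>n. Vf N X n \<omega>) t}. card {n\<in>{t..T}. Vf N X n \<omega> = Vf N X t \<omega>}) \<partial>M)"
proof -
  let ?a = "\<lambda>t \<omega>. of_bool (newv (\<lambda>n. Vf N X n \<omega>) t) :: real"
  let ?b = "\<lambda>t k \<omega>. of_bool (newv (\<lambda>n. Vf N X n \<omega>) t \<and> Vf N X (t+k) \<omega> = Vf N X t \<omega>) :: real"
  have ia: "integrable M (?a t)" "integral\<^sup>L M (?a t) = prob {\<omega>\<in>space M. newv (\<lambda>n. Vf N X n \<omega>) t}" for t
    using of_bool_integral[OF prob_space_axioms new_meas] by auto
  have ib: "integrable M (?b t k)" "integral\<^sup>L M (?b t k) = prob {\<omega>\<in>space M. newv (\<lambda>n. Vf N X n \<omega>) t \<and> Vf N X (t+k) \<omega> = Vf N X t \<omega>}" for t k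
    using of_bool_integral[OF prob_space_axioms eqV_meas] by auto
  have "(\<integral>\<omega>. real (\<Sum>t\<in>{t\<in>{1..N}. newv (\<lambda>n. Vf N X n \<omega>) t}. card {n\<in>{t..T}. Vf N X n \<omega> = Vf N X t \<omega>}) \<partial>M)
      = (\<integral>\<omega>. (\<Sum>t\<in>{1..N}. ?a t \<omega> + (\<Sum>k\<in>{1..T-t}. ?b t k \<omega>)) \<partial>M)"
    by (rule Bochner_Integration.integral_cong[OF refl]) (rule pointwise[OF assms, symmetric])
  also have "\<dots> = (\<Sum>t\<in>{1..N}. (\<integral>\<omega>. ?a t \<omega> + (\<Sum>k\<in>{1..T-t}. ?b t k \<omega>) \<partial>M))"
    by (rule Bochner_Integration.integral_sum[where f="\<lambda>t \<omega>. ?a t \<omega> + (\<Sum>k\<in>{1..T-t}. ?b t k \<omega>)"]) (intro Bochner_Integration.integrable_add Bochner_Integration.integrable_sum ia ib)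
  also have "\<dots> = (\<Sum>t\<in>{1..N}. prob {\<omega>\<in>space M. newv (\<lambda>n. Vf N X n \<omega>) t} * (1 + (\<Sum>k\<in>{1..T-t}. pk N k)))"
  proof (rule sum.cong[OF refl])
    fix t assume t: "t \<in> {1..N}"
    have "(\<integral>\<omega>. ?a t \<omega> + (\<Sum>k\<in>{1..T-t}. ?b t k \<omega>) \<partial>M) = integral\<^sup>L M (?a t) + (\<Sum>k\<in>{1..T-t}. integral\<^sup>L M (?b t k))"
      by (subst Bochner_Integration.integral_add, intro Bochner_Integration.integrable_sum ia ib, intro Bochner_Integration.integrable_sum ia ib)
         (subst Bochner_Integration.integral_sum[where f="\<lambda>k \<omega>. ?b t k \<omega>"], intro ib, rule refl)
    also have "\<dots> = prob {\<omega>\<in>space M. newv (\<lambda>n. Vf N X n \<omega>) t} * (1 + (\<Sum>k\<in>{1..T-t}. pk N k))"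
    proof -
      have "(\<Sum>k\<in>{1..T-t}. integral\<^sup>L M (?b t k)) = (\<Sum>k\<in>{1..T-t}. prob {\<omega>\<in>space M. newv (\<lambda>n. Vf N X n \<omega>) t} * pk N k)"
        using t by (intro sum.cong refl) (simp only: ib(2), rule joint, simp)
      then show ?thesis by (simp only: ia(2) sum_distrib_left distrib_left mult_1_right)
    qed
    finally show "(\<integral>\<omega>. ?a t \<omega> + (\<Sum>k\<in>{1..T-t}. ?b t k \<omega>) \<partial>M) = prob {\<omega>\<in>space M. newv (\<lambda>n. Vf N X n \<omega>) t} * (1 + (\<Sum>k\<in>{1..T-t}. pk N k))" .
  qed
  finally show ?thesis by simp
qed

lemma pk_nonneg: "0 \<le> pk N k" unfolding pk_def by simp

lemma lower:
  assumes "N \<ge> 1"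
  shows "real N \<le> (\<Sum>t\<in>{1..N}. prob {\<omega>\<in>space M. newv (\<lambda>n. Vf N X n \<omega>) t}) * (1 + (\<Sum>k\<in>{1..N-1}. pk N k))"
proof -
  have "real N = (\<integral>\<omega>. real N \<partial>M)" by (simp add: prob_space)
  also have "\<dots> = (\<integral>\<omega>. real (\<Sum>t\<in>{t\<in>{1..N}. newv (\<lambda>n. Vf N X n \<omega>) t}. card {n\<in>{t..N}. Vf N X n \<omega> = Vf N X t \<omega>}) \<partial>M)"
    by (simp only: count_eq)
  also have "\<dots> = (\<Sum>t\<in>{1..N}. prob {\<omega>\<in>space M. newv (\<lambda>n. Vf N X n \<omega>) t} * (1 + (\<Sum>k\<in>{1..N-t}. pk N k)))"
    by (rule expect_count[symmetric]) simp
  also have "\<dots> \<le> (\<Sum>t\<in>{1..N}. prob {\<omega>\<in>space M. newv (\<lambda>n. Vf N X n \<omega>) t} * (1 + (\<Sum>k\<in>{1..N-1}. pk N k)))"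
  proof (rule sum_mono)
    fix t assume t: "t \<in> {1..N}"
    have "(\<Sum>k\<in>{1..N-t}. pk N k) \<le> (\<Sum>k\<in>{1..N-1}. pk N k)"
      by (rule sum_mono2) (use t in \<open>auto simp: pk_nonneg\<close>)
    then show "prob {\<omega>\<in>space M. newv (\<lambda>n. Vf N X n \<omega>) t} * (1 + (\<Sum>k\<in>{1..N-t}. pk N k))
        \<le> prob {\<omega>\<in>space M. newv (\<lambda>n. Vf N X n \<omega>) t} * (1 + (\<Sum>k\<in>{1..N-1}. pk N k))"
      by (intro mult_left_mono) auto
  qed
  finally show ?thesis by (simp add: sum_distrib_right)
qed

lemma upper:
  assumes "N \<ge> 1"
  shows "(\<Sum>t\<in>{1..N}. prob {\<omega>\<in>space M. newv (\<lambda>n. Vf N X n \<omega>) t}) * (1 + (\<Sum>k\<in>{1..N-1}. pk N k)) \<le> 2 * real N"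
proof -
  have "(\<Sum>t\<in>{1..N}. prob {\<omega>\<in>space M. newv (\<lambda>n. Vf N X n \<omega>) t}) * (1 + (\<Sum>k\<in>{1..N-1}. pk N k))
      = (\<Sum>t\<in>{1..N}. prob {\<omega>\<in>space M. newv (\<lambda>n. Vf N X n \<omega>) t} * (1 + (\<Sum>k\<in>{1..N-1}. pk N k)))"
    by (simp add: sum_distrib_right)
  also have "\<dots> \<le> (\<Sum>t\<in>{1..N}. prob {\<omega>\<in>space M. newv (\<lambda>n. Vf N X n \<omega>) t} * (1 + (\<Sum>k\<in>{1..2*N-t}. pk N k)))"
  proof (rule sum_mono)
    fix t assume t: "t \<in> {1..N}"
    have "(\<Sum>k\<in>{1..N-1}. pk N k) \<le> (\<Sum>k\<in>{1..2*N-t}. pk N k)"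
      by (rule sum_mono2) (use t in \<open>auto simp: pk_nonneg\<close>)
    then show "prob {\<omega>\<in>space M. newv (\<lambda>n. Vf N X n \<omega>) t} * (1 + (\<Sum>k\<in>{1..N-1}. pk N k))
        \<le> prob {\<omega>\<in>space M. newv (\<lambda>n. Vf N X n \<omega>) t} * (1 + (\<Sum>k\<in>{1..2*N-t}. pk N k))"
      by (intro mult_left_mono) auto
  qed
  also have "\<dots> = (\<integral>\<omega>. real (\<Sum>t\<in>{t\<in>{1..N}. newv (\<lambda>n. Vf N X n \<omega>) t}. card {n\<in>{t..2*N}. Vf N X n \<omega> = Vf N X t \<omega>}) \<partial>M)"
    by (rule expect_count) simp
  also have "\<dots> \<le> (\<integral>\<omega>. real (2*N) \<partial>M)"
  proof (rule integral_mono)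
    show "integrable M (\<lambda>\<omega>. real (2*N))" by simp
    show "integrable M (\<lambda>\<omega>. real (\<Sum>t\<in>{t\<in>{1..N}. newv (\<lambda>n. Vf N X n \<omega>) t}. card {n\<in>{t..2*N}. Vf N X n \<omega> = Vf N X t \<omega>}))"
    proof -
      have eq: "(\<lambda>\<omega>. real (\<Sum>t\<in>{t\<in>{1..N}. newv (\<lambda>n. Vf N X n \<omega>) t}. card {n\<in>{t..2*N}. Vf N X n \<omega> = Vf N X t \<omega>}))
        = (\<lambda>\<omega>. (\<Sum>t\<in>{1..N}. of_bool (newv (\<lambda>n. Vf N X n \<omega>) t) +
            (\<Sum>k\<in>{1..2*N-t}. of_bool (newv (\<lambda>n. Vf N X n \<omega>) t \<and> Vf N X (t+k) \<omega> = Vf N X t \<omega>))))"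
        by (rule ext, rule pointwise[symmetric]) simp
      show ?thesis unfolding eq
        by (intro Bochner_Integration.integrable_sum Bochner_Integration.integrable_add
             of_bool_integral(1)[OF prob_space_axioms new_meas] of_bool_integral(1)[OF prob_space_axioms eqV_meas])
    qed
    fix \<omega> show "real (\<Sum>t\<in>{t\<in>{1..N}. newv (\<lambda>n. Vf N X n \<omega>) t}. card {n\<in>{t..2*N}. Vf N X n \<omega> = Vf N X t \<omega>}) \<le> real (2*N)"
      using count_le[of N "2*N" "\<lambda>n. Vf N X n \<omega>"] by (simp only: of_nat_le_iff)
  qed
  also have "\<dots> = 2 * real N" by (simp add: prob_space)
  finally show ?thesis .
qed

end


lemma mod_shift_iff:
  fixes a s n N :: int
  assumes "0 \<le> a" "a < N"
  shows "(a + s) mod N = n mod N \<longleftrightarrow> a = (n - s) mod N"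
proof -
  have "(a + s) mod N = n mod N \<longleftrightarrow> N dvd (a + s - n)" by (rule mod_eq_dvd_iff)
  also have "\<dots> \<longleftrightarrow> N dvd (a - (n - s))" by (simp add: algebra_simps)
  also have "\<dots> \<longleftrightarrow> a mod N = (n - s) mod N" by (rule mod_eq_dvd_iff[symmetric])
  also have "a mod N = a" using assms by simp
  finally show ?thesis .
qed

context iidZ
begin

lemma section_card:
  assumes "N \<ge> 1"
  shows "card ({0..<N} \<inter> {x. \<exists>n\<in>{1..N}. R_proc N X n (x, \<omega>) = int n mod int N})
       = card {t\<in>{1..N}. newv (\<lambda>n. Vf N X n \<omega>) t}"
proof -
  have "{0..<N} \<inter> {x. \<exists>n\<in>{1..N}. R_proc N X n (x, \<omega>) = int n mod int N} = nat ` ((\<lambda>n. Vf N X n \<omega>) ` {1..N})"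
  proof (rule set_eqI, rule iffI)
    fix x assume "x \<in> {0..<N} \<inter> {x. \<exists>n\<in>{1..N}. R_proc N X n (x, \<omega>) = int n mod int N}"
    then obtain n where x: "x < N" and n: "n \<in> {1..N}" and e: "(int x + partial_sum X n \<omega>) mod int N = int n mod int N"
      unfolding R_proc_def by auto
    have "int x = Vf N X n \<omega>" using e mod_shift_iff[of "int x" "int N"] x unfolding Vf_def by simp
    then have "x = nat (Vf N X n \<omega>)" by simp
    then show "x \<in> nat ` ((\<lambda>n. Vf N X n \<omega>) ` {1..N})" using n by blast
  next
    fix x assume "x \<in> nat ` ((\<lambda>n. Vf N X n \<omega>) ` {1..N})"
    then obtain n where n: "n \<in> {1..N}" and x: "x = nat (Vf N X n \<omega>)" by auto
    have v0: "0 \<le> Vf N X n \<omega>" and v1: "Vf N X n \<omega> < int N" using assms unfolding Vf_def by auto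
    then have xi: "int x = Vf N X n \<omega>" using x by simp
    then have "x < N" using v1 by simp
    moreover have "(int x + partial_sum X n \<omega>) mod int N = int n mod int N"
      using mod_shift_iff[of "int x" "int N" "partial_sum X n \<omega>" "int n"] xi \<open>x < N\<close> unfolding Vf_def by simp
    ultimately show "x \<in> {0..<N} \<inter> {x. \<exists>n\<in>{1..N}. R_proc N X n (x, \<omega>) = int n mod int N}"
      using n unfolding R_proc_def by auto
  qed
  moreover have "inj_on nat ((\<lambda>n. Vf N X n \<omega>) ` {1..N})"
  proof (rule inj_on_subset)
    show "inj_on nat {v::int. 0 \<le> v}" by (auto simp: inj_on_def)
    show "(\<lambda>n. Vf N X n \<omega>) ` {1..N} \<subseteq> {v. 0 \<le> v}" using assms by (auto simp: Vf_def)
  qed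
  ultimately have "card ({0..<N} \<inter> {x. \<exists>n\<in>{1..N}. R_proc N X n (x, \<omega>) = int n mod int N}) = card ((\<lambda>n. Vf N X n \<omega>) ` {1..N})"
    by (simp add: card_image)
  then show ?thesis using card_image_newv[of "\<lambda>n. Vf N X n \<omega>" N] by simp
qed

lemma R_meas: "R_proc N X n \<in> measurable (R_space N M) (count_space UNIV)"
proof -
  have h1: "(\<lambda>z. int (fst z)) \<in> measurable (R_space N M) (count_space UNIV)"
    unfolding R_space_def by (rule measurable_compose[OF measurable_fst]) simp
  have h2: "(\<lambda>z. partial_sum X n (snd z)) \<in> measurable (R_space N M) (count_space UNIV)"
    unfolding R_space_def by (rule measurable_compose[OF measurable_snd S_meas])
  show ?thesis unfolding R_proc_def[abs_def]
    using meas2[OF h1 h2, where h="\<lambda>a b. (a + b) mod int N"] by simp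
qed

lemma E_sets: "{z\<in>space (R_space N M). \<exists>n\<in>{1..N}. R_proc N X n z = int n mod int N} \<in> sets (R_space N M)"
proof (rule pred_set)
  show "(\<lambda>z. \<exists>n\<in>{1..N}. R_proc N X n z = int n mod int N) \<in> measurable (R_space N M) (count_space UNIV)"
    by (rule pred_intros_finite(4)[where I="{1..N}" and P="\<lambda>z n. R_proc N X n z = int n mod int N"])
       (use meas1[OF R_meas, where h="\<lambda>v. v = int n mod int N" for n] in auto)
qed

lemma measure_E:
  assumes "N \<ge> 1"
  shows "measure (R_space N M) {z\<in>space (R_space N M). \<exists>n\<in>{1..N}. R_proc N X n z = int n mod int N}
     = (\<Sum>t\<in>{1..N}. prob {\<omega>\<in>space M. newv (\<lambda>n. Vf N X n \<omega>) t}) / real N"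
proof -
  let ?p = "measure_pmf (pmf_of_set {0..<N})"
  let ?E = "{z\<in>space (R_space N M). \<exists>n\<in>{1..N}. R_proc N X n z = int n mod int N}"
  interpret pp: pair_prob_space ?p M
    by (intro pair_prob_space.intro pair_sigma_finite.intro prob_space_imp_sigma_finite
         prob_space_measure_pmf prob_space_axioms)
  let ?f = "\<lambda>\<omega>. (\<Sum>t\<in>{1..N}. of_bool (newv (\<lambda>n. Vf N X n \<omega>) t) :: real) / real N"
  have fi: "integrable M ?f"
    by (intro Bochner_Integration.integrable_divide Bochner_Integration.integrable_sum
        of_bool_integral(1)[OF prob_space_axioms new_meas])
  have "emeasure (R_space N M) ?E = (\<integral>\<^sup>+\<omega>. emeasure ?p ((\<lambda>x. (x, \<omega>)) -` ?E) \<partial>M)"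
    unfolding R_space_def by (rule pp.emeasure_pair_measure_alt2) (use E_sets in \<open>simp add: R_space_def\<close>)
  also have "\<dots> = (\<integral>\<^sup>+\<omega>. ennreal (?f \<omega>) \<partial>M)"
  proof (rule nn_integral_cong)
    fix \<omega> assume \<omega>: "\<omega> \<in> space M"
    have sec: "(\<lambda>x. (x, \<omega>)) -` ?E = {x. \<exists>n\<in>{1..N}. R_proc N X n (x, \<omega>) = int n mod int N}"
      using \<omega> by (auto simp: R_space_def space_pair_measure)
    have "emeasure ?p ((\<lambda>x. (x, \<omega>)) -` ?E) = ennreal (measure ?p ((\<lambda>x. (x, \<omega>)) -` ?E))"
      by (simp add: measure_pmf.emeasure_eq_measure)
    also have "measure ?p ((\<lambda>x. (x, \<omega>)) -` ?E) = real (card {t\<in>{1..N}. newv (\<lambda>n. Vf N X n \<omega>) t}) / real N"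
      unfolding sec using assms section_card[OF assms, of \<omega>] by (subst measure_pmf_of_set) auto
    also have "real (card {t\<in>{1..N}. newv (\<lambda>n. Vf N X n \<omega>) t}) = (\<Sum>t\<in>{1..N}. of_bool (newv (\<lambda>n. Vf N X n \<omega>) t))"
      by (rule card_filter_sum) simp
    finally show "emeasure ?p ((\<lambda>x. (x, \<omega>)) -` ?E) = ennreal (?f \<omega>)" .
  qed
  also have "\<dots> = ennreal (\<integral>\<omega>. ?f \<omega> \<partial>M)"
    by (rule nn_integral_eq_integral[OF fi]) (simp add: sum_nonneg)
  finally have em: "emeasure (R_space N M) ?E = ennreal (\<integral>\<omega>. ?f \<omega> \<partial>M)" .
  have I: "(\<integral>\<omega>. ?f \<omega> \<partial>M) = (\<Sum>t\<in>{1..N}. prob {\<omega>\<in>space M. newv (\<lambda>n. Vf N X n \<omega>) t}) / real N"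
  proof -
    have "(\<integral>\<omega>. (\<Sum>t\<in>{1..N}. of_bool (newv (\<lambda>n. Vf N X n \<omega>) t) :: real) \<partial>M)
        = (\<Sum>t\<in>{1..N}. (\<integral>\<omega>. (of_bool (newv (\<lambda>n. Vf N X n \<omega>) t) :: real) \<partial>M))"
      by (rule Bochner_Integration.integral_sum[where f="\<lambda>t \<omega>. of_bool (newv (\<lambda>n. Vf N X n \<omega>) t)"])
         (rule of_bool_integral(1)[OF prob_space_axioms new_meas])
    also have "\<dots> = (\<Sum>t\<in>{1..N}. prob {\<omega>\<in>space M. newv (\<lambda>n. Vf N X n \<omega>) t})"
      by (rule sum.cong[OF refl], rule of_bool_integral(2)[OF prob_space_axioms new_meas])
    finally show ?thesis by (simp only: Bochner_Integration.integral_divide_zero)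
  qed
  have em2: "emeasure (R_space N M) ?E = ennreal ((\<Sum>t\<in>{1..N}. prob {\<omega>\<in>space M. newv (\<lambda>n. Vf N X n \<omega>) t}) / real N)"
    using em unfolding I .
  have nn: "0 \<le> (\<Sum>t\<in>{1..N}. prob {\<omega>\<in>space M. newv (\<lambda>n. Vf N X n \<omega>) t}) / real N"
    by (intro divide_nonneg_nonneg sum_nonneg measure_nonneg) simp
  show ?thesis unfolding measure_def[of "R_space N M" ?E] em2 by (rule enn2real_ennreal[OF nn])
qed

end

theorem corollary3:
  fixes M :: "'a measure" and X :: "nat \<Rightarrow> 'a \<Rightarrow> int" and N :: nat
  assumes "prob_space M"
    and "prob_space.indep_vars M (\<lambda>_. count_space UNIV) X {1..}"
    and "\<And>j. j \<ge> 1 \<Longrightarrow> distr M (count_space UNIV) (X j) = distr M (count_space UNIV) (X 1)"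
    and "N \<ge> 2"
  defines "A \<equiv> 1 + (\<Sum>i\<in>{1..N-1}. measure M {\<omega> \<in> space M. partial_sum X i \<omega> mod int N = int i mod int N})"
  shows "1 / A \<le> measure (R_space N M)
           {z \<in> space (R_space N M). \<exists>n\<in>{1..N}. R_proc N X n z = int n mod int N}
       \<and> measure (R_space N M)
           {z \<in> space (R_space N M). \<exists>n\<in>{1..N}. R_proc N X n z = int n mod int N} \<le> 2 / A"
proof -
  interpret iidZ M X
    by (rule iidZ.intro[OF assms(1) iidZ_axioms.intro[OF assms(2,3)]])
  have N1: "N \<ge> 1" using assms(4) by simp
  define Q where "Q = (\<Sum>t\<in>{1..N}. prob {\<omega>\<in>space M. newv (\<lambda>n. Vf N X n \<omega>) t})"
  have Aeq: "A = 1 + (\<Sum>k\<in>{1..N-1}. pk N k)" unfolding A_def pk_def by simp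
  have Apos: "A > 0" unfolding Aeq using pk_nonneg by (simp add: add_pos_nonneg sum_nonneg)
  have lo: "real N \<le> Q * A" unfolding Q_def Aeq by (rule lower[OF N1])
  have up: "Q * A \<le> 2 * real N" unfolding Q_def Aeq by (rule upper[OF N1])
  have me: "measure (R_space N M) {z \<in> space (R_space N M). \<exists>n\<in>{1..N}. R_proc N X n z = int n mod int N} = Q / real N"
    unfolding Q_def by (rule measure_E[OF N1])
  have Npos: "real N > 0" using N1 by simp
  have "1 / A \<le> Q / real N" using lo Apos Npos by (simp add: divide_simps mult.commute)
  moreover have "Q / real N \<le> 2 / A" using up Apos Npos by (simp add: divide_simps mult.commute)
  ultimately show ?thesis unfolding me by simp
qed


end
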